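(* Let $\beta,\gamma>0$ with $m^{-\beta}(\log m)^\gamma\le1$. There is a constant $C>0$ independent of $m$, $t_0$, $t$ and of the initial condition such that for every solution $\theta(t)$ of the gradient flow, every $0\le t_0\le t$ such that $q_{\max}(s)\le m^{-\beta}(\log m)^\gamma$ for all $s\in[t_0,t]$, and every $i\in\{2,\dots,d\}$, $$\Big(\sum_{k=1}^m (w_k^i(t))^2\Big)^{1/2}\le\Big(\sum_{k=1}^m (w_k^i(t_0))^2\Big)^{1/2}+C\max\Big\{\frac{(\log m)^{3\gamma}}{m^{3\beta-\frac12}},\ \frac{(\log m)^{5\gamma}}{m^{5\beta-\frac32}}\Big\}(t-t_0).$$
   Context: Fix integers $d\ge2$, $m\ge2$. For $\theta=(a_k,w_k)_{k=1}^m$, $w_k=(w_k^1,\dots,w_k^d)^T$, let $f_\theta(x)=\sum_{k=1}^m a_k\sigma(w_k^Tx)$ and $R(\theta)=\tfrac12\int(f_\theta-f)^2\rho\,dx$, where $\rho$ is a compactly supported probability density on $\mathbb R^d$ with $\int x_i^2\rho=1$, $\int x_ix_j\rho=0$ ($i\ne j$); $f$ is bounded on $\mathrm{supp}\,\rho$ with $\int f(x)x\rho(x)dx=(1,0,\dots,0)^T$; $\sigma$ is three times differentiable with $\sigma(0)=0,\sigma'(0)=1,\sigma''(0)=0$, $|\sigma'''|\le C_{\rm L}$. The gradient flow is $\dot\theta=-\nabla_\theta R(\theta)$, and $q_{\max}(t)=\max_{k\in[m],i\in[d]}\{|a_k(t)|,|w_k^i(t)|\}$. $\log$ is natural. *)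

theory Defs
  imports "HOL-Analysis.Analysis"
begin

definition net :: "(real \<Rightarrow> real) \<Rightarrow> nat \<Rightarrow> (nat \<Rightarrow> real) \<Rightarrow> (nat \<Rightarrow> real^'d) \<Rightarrow> real^'d \<Rightarrow> real" where
  "net \<sigma> m a w x = (\<Sum>k<m. a k * \<sigma> (w k \<bullet> x))"

definition risk :: "(real \<Rightarrow> real) \<Rightarrow> (real^'d \<Rightarrow> real) \<Rightarrow> (real^'d \<Rightarrow> real) \<Rightarrow> nat
    \<Rightarrow> (nat \<Rightarrow> real) \<Rightarrow> (nat \<Rightarrow> real^'d) \<Rightarrow> real" where
  "risk \<sigma> f \<rho> m a w = (1/2) * integral\<^sup>L lborel (\<lambda>x. (net \<sigma> m a w x - f x)^2 * \<rho> x)"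

definition upd_comp :: "real^'d \<Rightarrow> 'd \<Rightarrow> real \<Rightarrow> real^'d" where
  "upd_comp v i c = (\<chi> j. if j = i then c else v $ j)"

definition grad_flow :: "(real \<Rightarrow> real) \<Rightarrow> (real^'d \<Rightarrow> real) \<Rightarrow> (real^'d \<Rightarrow> real) \<Rightarrow> nat
    \<Rightarrow> (real \<Rightarrow> nat \<Rightarrow> real) \<Rightarrow> (real \<Rightarrow> nat \<Rightarrow> real^'d) \<Rightarrow> bool" where
  "grad_flow \<sigma> f \<rho> m a w \<longleftrightarrow>
     (\<forall>s\<ge>0. \<forall>k<m.
        (\<exists>D. ((\<lambda>c. risk \<sigma> f \<rho> m ((a s)(k := c)) (w s)) has_real_derivative D) (at (a s k))
             \<and> ((\<lambda>\<tau>. a \<tau> k) has_real_derivative (- D)) (at s within {0..}))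
      \<and> (\<forall>i. \<exists>D. ((\<lambda>c. risk \<sigma> f \<rho> m (a s) ((w s)(k := upd_comp (w s k) i c))) has_real_derivative D)
                    (at (w s k $ i))
             \<and> ((\<lambda>\<tau>. w \<tau> k $ i) has_real_derivative (- D)) (at s within {0..})))"

definition qmax :: "nat \<Rightarrow> (nat \<Rightarrow> real) \<Rightarrow> (nat \<Rightarrow> real^'d::finite) \<Rightarrow> real" where
  "qmax m a w = Max ({\<bar>a k\<bar> | k. k < m} \<union> {\<bar>w k $ i\<bar> | k i. k < m})"

end

theory Submission
  imports Defs
begin

lemma mvt_abs:
  fixes g g' :: "real \<Rightarrow> real"
  assumes d: "\<And>y. (g has_real_derivative g' y) (at y)"
    and b: "\<And>y. \<bar>y - z\<bar> \<le> \<bar>t\<bar> \<Longrightarrow> \<bar>g' y\<bar> \<le> K"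
  shows "\<bar>g (z + t) - g z\<bar> \<le> K * \<bar>t\<bar>"
proof (cases t "0::real" rule: linorder_cases)
  case less
  obtain y where y: "z + t < y" "y < z" "g z - g (z + t) = (z - (z + t)) * g' y"
    using MVT2[of "z+t" z g g'] less d by auto
  have "\<bar>g' y\<bar> \<le> K" using b y less by auto
  then show ?thesis using y less by (simp add: abs_mult abs_minus_commute mult.commute)
next
  case equal then show ?thesis by simp
next
  case greater
  obtain y where y: "z < y" "y < z + t" "g (z + t) - g z = (z + t - z) * g' y"
    using MVT2[of z "z+t" g g'] greater d by auto
  have "\<bar>g' y\<bar> \<le> K" using b y greater by auto
  then show ?thesis using y greater by (simp add: abs_mult mult.commute)
qed

locale sig =
  fixes \<sigma> \<sigma>1 \<sigma>2 \<sigma>3 :: "real \<Rightarrow> real" and CL :: real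
  assumes s1: "\<And>z. (\<sigma> has_real_derivative \<sigma>1 z) (at z)"
    and s2: "\<And>z. (\<sigma>1 has_real_derivative \<sigma>2 z) (at z)"
    and s3: "\<And>z. (\<sigma>2 has_real_derivative \<sigma>3 z) (at z)"
    and s0: "\<sigma> 0 = 0" "\<sigma>1 0 = 1" "\<sigma>2 0 = 0"
    and sL: "\<And>z. \<bar>\<sigma>3 z\<bar> \<le> CL"
begin

lemma CL_nonneg: "CL \<ge> 0" using sL[of 0] by simp

lemma s2_bound: "\<bar>\<sigma>2 y\<bar> \<le> CL * \<bar>y\<bar>"
  using mvt_abs[of \<sigma>2 \<sigma>3 0 y CL] s3 sL s0 by auto

lemma s2_bound': "\<bar>y\<bar> \<le> R \<Longrightarrow> \<bar>\<sigma>2 y\<bar> \<le> CL * R"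
  using s2_bound[of y] CL_nonneg by (meson mult_left_mono order_trans)

lemma s1_bound: "\<bar>\<sigma>1 y - 1\<bar> \<le> CL * y\<^sup>2"
proof -
  have "\<bar>\<sigma>1 (0 + y) - \<sigma>1 0\<bar> \<le> (CL * \<bar>y\<bar>) * \<bar>y\<bar>"
    by (rule mvt_abs[of \<sigma>1 \<sigma>2]) (use s2 s2_bound' in auto)
  then show ?thesis using s0 by (simp add: power2_eq_square abs_mult_self_eq flip: abs_mult)
qed

lemma s1_abs: "\<bar>\<sigma>1 y\<bar> \<le> 1 + CL * y\<^sup>2"
  using s1_bound[of y] by linarith

lemma s_bound: "\<bar>\<sigma> y - y\<bar> \<le> CL * y\<^sup>2 * \<bar>y\<bar>"
proof -
  have "\<bar>(\<lambda>y. \<sigma> y - y) (0 + y) - (\<lambda>y. \<sigma> y - y) 0\<bar> \<le> (CL * y\<^sup>2) * \<bar>y\<bar>"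
  proof (rule mvt_abs[where g' = "\<lambda>y. \<sigma>1 y - 1"])
    show "((\<lambda>y. \<sigma> y - y) has_real_derivative \<sigma>1 y' - 1) (at y')" for y'
      using s1 by (auto intro!: derivative_eq_intros)
    show "\<bar>\<sigma>1 y' - 1\<bar> \<le> CL * y\<^sup>2" if "\<bar>y' - 0\<bar> \<le> \<bar>y\<bar>" for y'
    proof -
      have "y'\<^sup>2 \<le> y\<^sup>2" using that by (simp add: abs_le_square_iff)
      then show ?thesis using s1_bound[of y'] CL_nonneg
        by (meson mult_left_mono order_trans)
    qed
  qed
  then show ?thesis using s0 by simp
qed

lemma s_abs: "\<bar>\<sigma> y\<bar> \<le> \<bar>y\<bar> + CL * y\<^sup>2 * \<bar>y\<bar>"
  using s_bound[of y] by linarith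

lemma s_incr: "\<bar>\<sigma> (z + t) - \<sigma> z\<bar> \<le> (1 + CL * (\<bar>z\<bar> + \<bar>t\<bar>)\<^sup>2) * \<bar>t\<bar>"
proof (rule mvt_abs[of \<sigma> \<sigma>1])
  show "(\<sigma> has_real_derivative \<sigma>1 y) (at y)" for y using s1 .
  show "\<bar>\<sigma>1 y\<bar> \<le> 1 + CL * (\<bar>z\<bar> + \<bar>t\<bar>)\<^sup>2" if "\<bar>y - z\<bar> \<le> \<bar>t\<bar>" for y
  proof -
    have "\<bar>y\<bar> \<le> \<bar>z\<bar> + \<bar>t\<bar>" using that by linarith
    then have "y\<^sup>2 \<le> (\<bar>z\<bar> + \<bar>t\<bar>)\<^sup>2" by (metis abs_ge_zero power2_abs power_mono)
    then show ?thesis using s1_abs[of y] CL_nonneg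
      by (smt (verit) mult_left_mono)
  qed
qed

lemma s_taylor: "\<bar>\<sigma> (z + t) - \<sigma> z - t * \<sigma>1 z\<bar> \<le> (CL * (\<bar>z\<bar> + \<bar>t\<bar>) * \<bar>t\<bar>) * \<bar>t\<bar>"
proof -
  have "\<bar>(\<lambda>y. \<sigma> y - y * \<sigma>1 z) (z + t) - (\<lambda>y. \<sigma> y - y * \<sigma>1 z) z\<bar> \<le> (CL * (\<bar>z\<bar> + \<bar>t\<bar>) * \<bar>t\<bar>) * \<bar>t\<bar>"
  proof (rule mvt_abs[where g' = "\<lambda>y. \<sigma>1 y - \<sigma>1 z"])
    show "((\<lambda>y. \<sigma> y - y * \<sigma>1 z) has_real_derivative \<sigma>1 y - \<sigma>1 z) (at y)" for y
      using s1 by (auto intro!: derivative_eq_intros)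
    show "\<bar>\<sigma>1 y - \<sigma>1 z\<bar> \<le> CL * (\<bar>z\<bar> + \<bar>t\<bar>) * \<bar>t\<bar>" if "\<bar>y - z\<bar> \<le> \<bar>t\<bar>" for y
    proof -
      have "\<bar>\<sigma>1 (z + (y - z)) - \<sigma>1 z\<bar> \<le> (CL * (\<bar>z\<bar> + \<bar>t\<bar>)) * \<bar>y - z\<bar>"
      proof (rule mvt_abs[of \<sigma>1 \<sigma>2])
        show "(\<sigma>1 has_real_derivative \<sigma>2 y) (at y)" for y using s2 .
        show "\<bar>\<sigma>2 y'\<bar> \<le> CL * (\<bar>z\<bar> + \<bar>t\<bar>)" if "\<bar>y' - z\<bar> \<le> \<bar>y - z\<bar>" for y'
          by (rule s2_bound') (use that \<open>\<bar>y - z\<bar> \<le> \<bar>t\<bar>\<close> in linarith)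
      qed
      also have "\<dots> \<le> CL * (\<bar>z\<bar> + \<bar>t\<bar>) * \<bar>t\<bar>"
        using that CL_nonneg by (simp add: mult_left_mono)
      finally show ?thesis by simp
    qed
  qed
  then show ?thesis by (simp add: algebra_simps)
qed

end

lemma abs_mult_le: "\<bar>x\<bar> \<le> a \<Longrightarrow> \<bar>y\<bar> \<le> b \<Longrightarrow> \<bar>x * y\<bar> \<le> a * (b::real)"
  by (simp add: abs_mult mult_mono')

lemma deriv_from_bound:
  fixes g :: "real \<Rightarrow> real"
  assumes b: "\<And>h. \<bar>h\<bar> \<le> 1 \<Longrightarrow> \<bar>g (x + h) - g x - h * D\<bar> \<le> K * h\<^sup>2"
  shows "(g has_real_derivative D) (at x)"
  unfolding DERIV_def LIM_eq
proof (intro allI impI)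
  fix r :: real assume r: "r > 0"
  define s where "s = min 1 (r / (\<bar>K\<bar> + 1))"
  have s: "s > 0" using r by (simp add: s_def)
  show "\<exists>s>0. \<forall>h. h \<noteq> 0 \<and> norm (h - 0) < s \<longrightarrow> norm ((g (x + h) - g x) / h - D) < r"
  proof (intro exI[of _ s] conjI allI impI s)
    fix h :: real assume h: "h \<noteq> 0 \<and> norm (h - 0) < s"
    then have h1: "\<bar>h\<bar> \<le> 1" and h2: "\<bar>h\<bar> < r / (\<bar>K\<bar> + 1)" by (auto simp: s_def)
    have "(g (x + h) - g x) / h - D = (g (x + h) - g x - h * D) / h" using h by (simp add: field_simps)
    then have "\<bar>(g (x + h) - g x) / h - D\<bar> = \<bar>g (x + h) - g x - h * D\<bar> / \<bar>h\<bar>" by simp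
    also have "\<dots> \<le> K * h\<^sup>2 / \<bar>h\<bar>" using b[OF h1] h by (simp add: divide_right_mono)
    also have "\<dots> = K * \<bar>h\<bar>"
    proof -
      show ?thesis using h by (cases "h > 0") (auto simp: power2_eq_square field_simps)
    qed
    also have "\<dots> \<le> \<bar>K\<bar> * \<bar>h\<bar>" by (simp add: mult_right_mono)
    also have "\<dots> < r"
    proof -
      have "(\<bar>K\<bar> + 1) * \<bar>h\<bar> < r" using h2 by (simp add: field_simps)
      then show ?thesis by (smt (verit) abs_ge_zero mult_right_mono)
    qed
    finally show "norm ((g (x + h) - g x) / h - D) < r" by simp
  qed
qed

lemma bint:
  fixes \<rho> g :: "real^'d \<Rightarrow> real"
  assumes rm: "\<rho> \<in> borel_measurable borel" and rn: "\<And>x. \<rho> x \<ge> 0" and ri: "integrable lborel \<rho>"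
    and gm: "g \<in> borel_measurable borel" and gb: "\<And>x. \<rho> x \<noteq> 0 \<Longrightarrow> \<bar>g x\<bar> \<le> K"
  shows "integrable lborel (\<lambda>x. g x * \<rho> x)" "\<bar>integral\<^sup>L lborel (\<lambda>x. g x * \<rho> x)\<bar> \<le> K * integral\<^sup>L lborel \<rho>"
proof -
  have pt: "\<bar>g x * \<rho> x\<bar> \<le> K * \<rho> x" for x
  proof (cases "\<rho> x = 0")
    case True then show ?thesis by simp
  next
    case False then show ?thesis using gb[OF False] rn[of x] by (simp add: abs_mult mult_right_mono)
  qed
  have iK: "integrable lborel (\<lambda>x. K * \<rho> x)" using ri by simp
  show i: "integrable lborel (\<lambda>x. g x * \<rho> x)"
    by (rule Bochner_Integration.integrable_bound[OF iK]) (use gm rm pt in \<open>auto intro!: order_trans[OF _ abs_ge_self]\<close>)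
  have "norm (integral\<^sup>L lborel (\<lambda>x. g x * \<rho> x)) \<le> integral\<^sup>L lborel (\<lambda>x. K * \<rho> x)"
    by (rule Bochner_Integration.integral_norm_bound_integral[OF i iK]) (use pt in auto)
  then show "\<bar>integral\<^sup>L lborel (\<lambda>x. g x * \<rho> x)\<bar> \<le> K * integral\<^sup>L lborel \<rho>" by simp
qed

lemma inner_upd: "upd_comp v i c \<bullet> x = v \<bullet> x + (c - v $ i) * x $ i"
proof -
  have "\<And>j. (if j = i then c else v $ j) * x $ j = v $ j * x $ j + (if j = i then (c - v $ i) * x $ i else 0)"
    by (auto simp: algebra_simps)
  then show ?thesis
    by (simp add: inner_vec_def upd_comp_def sum.distrib)
qed

lemma net_upd:
  assumes "k < m"
  shows "net \<sigma> m a (W(k := V)) x = net \<sigma> m a W x + a k * (\<sigma> (V \<bullet> x) - \<sigma> (W k \<bullet> x))"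
proof -
  have "\<And>l. a l * \<sigma> ((W(k := V)) l \<bullet> x) = a l * \<sigma> (W l \<bullet> x) + (if l = k then a k * (\<sigma> (V \<bullet> x) - \<sigma> (W k \<bullet> x)) else 0)"
    by (auto simp: algebra_simps)
  then show ?thesis using assms by (simp add: net_def sum.distrib)
qed


context sig begin

lemma sig_cont: "continuous_on UNIV \<sigma>" "continuous_on UNIV \<sigma>1"
  using s1 s2 by (auto intro!: continuous_at_imp_continuous_on DERIV_isCont)

lemma sig_meas[measurable]: "\<sigma> \<in> borel_measurable borel" "\<sigma>1 \<in> borel_measurable borel"
  using sig_cont by (auto intro: borel_measurable_continuous_onI)

lemma sU: "\<bar>y\<bar> \<le> U \<Longrightarrow> \<bar>\<sigma> y - y\<bar> \<le> CL * U\<^sup>2 * U"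
proof -
  assume a: "\<bar>y\<bar> \<le> U"
  then have "y\<^sup>2 \<le> U\<^sup>2" by (metis abs_ge_zero power2_abs power_mono)
  then have "CL * y\<^sup>2 \<le> CL * U\<^sup>2" using CL_nonneg by (simp add: mult_left_mono)
  then have "CL * y\<^sup>2 * \<bar>y\<bar> \<le> CL * U\<^sup>2 * U" using a CL_nonneg by (simp add: mult_mono')
  then show ?thesis using s_bound[of y] by linarith
qed

lemma sU': "\<bar>y\<bar> \<le> U \<Longrightarrow> \<bar>\<sigma> y\<bar> \<le> U + CL * U\<^sup>2 * U"
  using sU[of y U] by linarith

lemma s1U: "\<bar>y\<bar> \<le> U \<Longrightarrow> \<bar>\<sigma>1 y - 1\<bar> \<le> CL * U\<^sup>2"
proof -
  assume a: "\<bar>y\<bar> \<le> U"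
  then have "y\<^sup>2 \<le> U\<^sup>2" by (metis abs_ge_zero power2_abs power_mono)
  then have "CL * y\<^sup>2 \<le> CL * U\<^sup>2" using CL_nonneg by (simp add: mult_left_mono)
  then show ?thesis using s1_bound[of y] by linarith
qed

lemma s1U': "\<bar>y\<bar> \<le> U \<Longrightarrow> \<bar>\<sigma>1 y\<bar> \<le> 1 + CL * U\<^sup>2"
  using s1U[of y U] by linarith

lemma net_bound:
  assumes "\<And>l. l < m \<Longrightarrow> \<bar>a l\<bar> \<le> A" "\<And>l. l < m \<Longrightarrow> \<bar>W l \<bullet> x\<bar> \<le> U"
  shows "\<bar>net \<sigma> m a W x\<bar> \<le> real m * (A * (U + CL * U\<^sup>2 * U))"
proof -
  have "\<bar>net \<sigma> m a W x\<bar> \<le> (\<Sum>l<m. \<bar>a l * \<sigma> (W l \<bullet> x)\<bar>)" unfolding net_def by (rule sum_abs)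
  also have "\<dots> \<le> (\<Sum>l<m. A * (U + CL * U\<^sup>2 * U))"
  proof (rule sum_mono)
    fix l assume "l \<in> {..<m}"
    then have "\<bar>a l\<bar> \<le> A" "\<bar>\<sigma> (W l \<bullet> x)\<bar> \<le> U + CL * U\<^sup>2 * U" using assms sU' by auto
    then show "\<bar>a l * \<sigma> (W l \<bullet> x)\<bar> \<le> A * (U + CL * U\<^sup>2 * U)" by (rule abs_mult_le)
  qed
  finally show ?thesis by simp
qed

lemma cont_sig[continuous_intros]: "continuous_on A g \<Longrightarrow> continuous_on A (\<lambda>x. \<sigma> (g x))"
  using continuous_on_compose2[OF sig_cont(1)] by auto

end

locale setting = sig \<sigma> \<sigma>1 \<sigma>2 \<sigma>3 CL for \<sigma> \<sigma>1 \<sigma>2 \<sigma>3 CL +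
  fixes \<rho> f :: "real^'d \<Rightarrow> real" and j0 :: 'd
  assumes rho_meas[measurable]: "\<rho> \<in> borel_measurable borel"
    and rho_nonneg: "\<And>x. \<rho> x \<ge> 0"
    and rho_int: "integrable lborel \<rho>"
    and rho_prob: "integral\<^sup>L lborel \<rho> = 1"
    and rho_cpt: "compact (closure {x. \<rho> x \<noteq> 0})"
    and rho_second: "\<And>i j. integrable lborel (\<lambda>x. x $ i * x $ j * \<rho> x)"
    and rho_var: "\<And>i. integral\<^sup>L lborel (\<lambda>x. (x $ i)^2 * \<rho> x) = 1"
    and rho_cov: "\<And>i j. i \<noteq> j \<Longrightarrow> integral\<^sup>L lborel (\<lambda>x. x $ i * x $ j * \<rho> x) = 0"
    and f_meas[measurable]: "f \<in> borel_measurable borel"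
    and f_bdd: "bounded (f ` closure {x. \<rho> x \<noteq> 0})"
    and f_corr: "\<And>j. integral\<^sup>L lborel (\<lambda>x. f x * x $ j * \<rho> x) = (if j = j0 then 1 else 0)"
begin

lemma bint': 
  assumes "g \<in> borel_measurable borel" "\<And>x. \<rho> x \<noteq> 0 \<Longrightarrow> \<bar>g x\<bar> \<le> K"
  shows "integrable lborel (\<lambda>x. g x * \<rho> x)" "\<bar>integral\<^sup>L lborel (\<lambda>x. g x * \<rho> x)\<bar> \<le> K"
  using bint[of \<rho> g K, OF rho_meas rho_nonneg rho_int assms] rho_prob by auto

lemma supp_bound: "\<exists>B\<ge>0. \<forall>x. \<rho> x \<noteq> 0 \<longrightarrow> norm x \<le> B"
proof -
  obtain b where b: "\<forall>x\<in>closure {x. \<rho> x \<noteq> 0}. norm x \<le> b"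
    using compact_imp_bounded[OF rho_cpt] unfolding bounded_iff by blast
  have "\<rho> x \<noteq> 0 \<Longrightarrow> norm x \<le> max b 0" for x
    using b closure_subset[of "{x. \<rho> x \<noteq> 0}"] by force
  then show ?thesis by (intro exI[of _ "max b 0"]) auto
qed

lemma f_bound: "\<exists>M\<ge>0. \<forall>x. \<rho> x \<noteq> 0 \<longrightarrow> \<bar>f x\<bar> \<le> M"
proof -
  obtain b where b: "\<forall>y\<in>f ` closure {x. \<rho> x \<noteq> 0}. norm y \<le> b"
    using f_bdd unfolding bounded_iff by blast
  have "\<rho> x \<noteq> 0 \<Longrightarrow> \<bar>f x\<bar> \<le> max b 0" for x
    using b closure_subset[of "{x. \<rho> x \<noteq> 0}"] by force
  then show ?thesis by (intro exI[of _ "max b 0"]) auto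
qed

lemma net_meas[measurable]: "(\<lambda>x. net \<sigma> m a W x) \<in> borel_measurable borel"
  unfolding net_def by (intro borel_measurable_continuous_onI continuous_intros)

end
context setting begin

lemma risk_deriv:
  assumes k: "k < m"
  shows "((\<lambda>c. risk \<sigma> f \<rho> m a (W(k := upd_comp (W k) i c))) has_real_derivative
           integral\<^sup>L lborel (\<lambda>x. ((net \<sigma> m a W x - f x) * (a k * \<sigma>1 (W k \<bullet> x) * x $ i)) * \<rho> x)) (at (W k $ i))"
proof -
  obtain B where B: "B \<ge> 0" "\<And>x. \<rho> x \<noteq> 0 \<Longrightarrow> norm x \<le> B" using supp_bound by blast
  obtain M where M: "M \<ge> 0" "\<And>x. \<rho> x \<noteq> 0 \<Longrightarrow> \<bar>f x\<bar> \<le> M" using f_bound by blast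
  define c0 where "c0 = W k $ i"
  define E where "E x = net \<sigma> m a W x - f x" for x
  define u where "u x = W k \<bullet> x" for x
  define \<Delta> where "\<Delta> h x = \<sigma> (u x + h * x $ i) - \<sigma> (u x)" for h x
  define A where "A = (\<Sum>l<m. \<bar>a l\<bar>)"
  define Uv where "Uv = (\<Sum>l<m. norm (W l)) * B"
  define U where "U = norm (W k) * B"
  define ME where "ME = real m * (A * (Uv + CL * Uv\<^sup>2 * Uv)) + M"
  define DB where "DB = (1 + CL * (U + B)\<^sup>2) * B"
  define Q where "Q x = E x * (a k * \<sigma>1 (u x) * x $ i)" for x
  define P where "P h x = (E x + a k * \<Delta> h x)\<^sup>2" for h x
  have U0: "U \<ge> 0" unfolding U_def using B by simp
  have CL0: "CL \<ge> 0" by (rule CL_nonneg)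
  have xi: "\<rho> x \<noteq> 0 \<Longrightarrow> \<bar>x $ i\<bar> \<le> B" for x using B(2) component_le_norm_cart order_trans by blast
  have uB: "\<rho> x \<noteq> 0 \<Longrightarrow> \<bar>u x\<bar> \<le> U" for x
  proof -
    assume "\<rho> x \<noteq> 0"
    have "\<bar>u x\<bar> \<le> norm (W k) * norm x" unfolding u_def by (rule Cauchy_Schwarz_ineq2)
    also have "\<dots> \<le> U" unfolding U_def using B(2)[OF \<open>\<rho> x \<noteq> 0\<close>] by (simp add: mult_left_mono)
    finally show ?thesis .
  qed
  have EB: "\<rho> x \<noteq> 0 \<Longrightarrow> \<bar>E x\<bar> \<le> ME" for x
  proof -
    assume x: "\<rho> x \<noteq> 0"
    have "\<bar>net \<sigma> m a W x\<bar> \<le> real m * (A * (Uv + CL * Uv\<^sup>2 * Uv))"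
    proof (rule net_bound)
      show "\<bar>a l\<bar> \<le> A" if "l < m" for l unfolding A_def using that by (intro member_le_sum) auto
      show "\<bar>W l \<bullet> x\<bar> \<le> Uv" if "l < m" for l
      proof -
        have "\<bar>W l \<bullet> x\<bar> \<le> norm (W l) * norm x" by (rule Cauchy_Schwarz_ineq2)
        also have "\<dots> \<le> norm (W l) * B" using B(2)[OF x] by (simp add: mult_left_mono)
        also have "\<dots> \<le> Uv" unfolding Uv_def using that B(1) by (intro mult_right_mono member_le_sum) auto
        finally show ?thesis .
      qed
    qed
    then show ?thesis unfolding E_def ME_def using M(2)[OF x] by linarith
  qed
  have A0: "A \<ge> 0" unfolding A_def by (simp add: sum_nonneg)
  have Uv0: "Uv \<ge> 0" unfolding Uv_def using B(1) by (simp add: sum_nonneg)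
  have ME0: "ME \<ge> 0" unfolding ME_def using A0 Uv0 CL_nonneg M(1)
    by (intro add_nonneg_nonneg mult_nonneg_nonneg) auto
  have tB: "\<bar>h * x $ i\<bar> \<le> B * \<bar>h\<bar>" "\<bar>u x\<bar> + \<bar>h * x $ i\<bar> \<le> U + B"
    if "\<rho> x \<noteq> 0" "\<bar>h\<bar> \<le> 1" for h x
  proof -
    show 1: "\<bar>h * x $ i\<bar> \<le> B * \<bar>h\<bar>" using mult_left_mono[OF xi[OF that(1)] abs_ge_zero[of h]] by (metis abs_mult mult.commute)
    have "B * \<bar>h\<bar> \<le> B" using that(2) B(1) by (simp add: mult_left_le)
    then show "\<bar>u x\<bar> + \<bar>h * x $ i\<bar> \<le> U + B" using 1 uB[OF that(1)] by linarith
  qed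
  have DeltaB: "\<bar>\<Delta> h x\<bar> \<le> DB * \<bar>h\<bar>" if "\<rho> x \<noteq> 0" "\<bar>h\<bar> \<le> 1" for h x
  proof -
    have a: "(\<bar>u x\<bar> + \<bar>h * x $ i\<bar>)\<^sup>2 \<le> (U + B)\<^sup>2"
      using tB(2)[OF that] by (simp add: power_mono)
    have b: "1 + CL * (\<bar>u x\<bar> + \<bar>h * x $ i\<bar>)\<^sup>2 \<le> 1 + CL * (U + B)\<^sup>2"
      using mult_left_mono[OF a CL0] by simp
    have "\<bar>\<Delta> h x\<bar> \<le> (1 + CL * (\<bar>u x\<bar> + \<bar>h * x $ i\<bar>)\<^sup>2) * \<bar>h * x $ i\<bar>"
      unfolding \<Delta>_def by (rule s_incr)
    also have "\<dots> \<le> (1 + CL * (U + B)\<^sup>2) * (B * \<bar>h\<bar>)"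
      by (rule mult_mono[OF b tB(1)[OF that]]) (use CL0 in auto)
    finally show ?thesis by (simp add: DB_def mult.assoc)
  qed
  have TayB: "\<bar>\<Delta> h x - h * x $ i * \<sigma>1 (u x)\<bar> \<le> CL * (U + B) * B\<^sup>2 * h\<^sup>2" if "\<rho> x \<noteq> 0" "\<bar>h\<bar> \<le> 1" for h x
  proof -
    have "\<bar>\<Delta> h x - h * x $ i * \<sigma>1 (u x)\<bar> \<le> (CL * (\<bar>u x\<bar> + \<bar>h * x $ i\<bar>) * \<bar>h * x $ i\<bar>) * \<bar>h * x $ i\<bar>"
      unfolding \<Delta>_def by (rule s_taylor)
    also have "\<dots> \<le> (CL * (U + B) * (B * \<bar>h\<bar>)) * (B * \<bar>h\<bar>)"
      using tB[OF that] CL0 by (intro mult_mono) auto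
    also have "\<dots> = CL * (U + B) * B\<^sup>2 * h\<^sup>2" by (simp add: power2_eq_square)
    finally show ?thesis .
  qed
  have [measurable]: "(\<lambda>x. E x) \<in> borel_measurable borel" unfolding E_def by measurable
  have [measurable]: "(\<lambda>x. u x) \<in> borel_measurable borel" unfolding u_def by measurable
  have [measurable]: "(\<lambda>x. \<Delta> h x) \<in> borel_measurable borel" for h unfolding \<Delta>_def by measurable
  have iP: "integrable lborel (\<lambda>x. P h x * \<rho> x)" if "\<bar>h\<bar> \<le> 1" for h
  proof (rule bint'(1))
    show "(\<lambda>x. P h x) \<in> borel_measurable borel" unfolding P_def by measurable
    show "\<bar>P h x\<bar> \<le> (ME + \<bar>a k\<bar> * (DB * \<bar>h\<bar>))\<^sup>2" if "\<rho> x \<noteq> 0" for x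
    proof -
      have "\<bar>E x + a k * \<Delta> h x\<bar> \<le> ME + \<bar>a k\<bar> * (DB * \<bar>h\<bar>)"
      proof -
        have "\<bar>a k * \<Delta> h x\<bar> \<le> \<bar>a k\<bar> * (DB * \<bar>h\<bar>)"
          by (rule abs_mult_le) (use DeltaB[OF that \<open>\<bar>h\<bar> \<le> 1\<close>] in auto)
        then show ?thesis using EB[OF that] abs_triangle_ineq[of "E x" "a k * \<Delta> h x"] by linarith
      qed
      then show ?thesis unfolding P_def by (metis abs_ge_zero power2_abs power_mono abs_power2)
    qed
  qed
  have iQ: "integrable lborel (\<lambda>x. Q x * \<rho> x)"
  proof (rule bint'(1))
    show "(\<lambda>x. Q x) \<in> borel_measurable borel" unfolding Q_def by measurable
    show "\<bar>Q x\<bar> \<le> ME * (\<bar>a k\<bar> * (1 + CL * U\<^sup>2) * B)" if "\<rho> x \<noteq> 0" for x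
      unfolding Q_def using EB[OF that] s1U'[OF uB[OF that]] xi[OF that]
      by (intro abs_mult_le) (auto simp: abs_mult intro!: mult_mono)
  qed
  have riskc: "risk \<sigma> f \<rho> m a (W(k := upd_comp (W k) i (c0 + h))) = 1/2 * integral\<^sup>L lborel (\<lambda>x. P h x * \<rho> x)" for h
  proof -
    have "net \<sigma> m a (W(k := upd_comp (W k) i (c0 + h))) x = net \<sigma> m a W x + a k * \<Delta> h x" for x
      unfolding \<Delta>_def u_def c0_def net_upd[OF k] inner_upd by simp
    then show ?thesis unfolding risk_def P_def E_def by (simp add: algebra_simps)
  qed
  define Kc where "Kc = \<bar>a k\<bar> * ME * (CL * (U + B) * B\<^sup>2) + (a k)\<^sup>2 * DB\<^sup>2 / 2"
  have main: "\<bar>(\<lambda>c. risk \<sigma> f \<rho> m a (W(k := upd_comp (W k) i c))) (c0 + h) - (\<lambda>c. risk \<sigma> f \<rho> m a (W(k := upd_comp (W k) i c))) c0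
      - h * integral\<^sup>L lborel (\<lambda>x. Q x * \<rho> x)\<bar> \<le> Kc * h\<^sup>2" if h: "\<bar>h\<bar> \<le> 1" for h
  proof -
    define G where "G x = a k * E x * (\<Delta> h x - h * x $ i * \<sigma>1 (u x)) + (a k)\<^sup>2 * (\<Delta> h x)\<^sup>2 / 2" for x
    have D0: "\<Delta> 0 x = 0" for x by (simp add: \<Delta>_def)
    have Geq: "G x * \<rho> x = 1/2 * (P h x * \<rho> x) - 1/2 * (P 0 x * \<rho> x) - h * (Q x * \<rho> x)" for x
      by (simp add: G_def P_def Q_def D0 power2_eq_square algebra_simps)
    have "(\<lambda>c. risk \<sigma> f \<rho> m a (W(k := upd_comp (W k) i c))) (c0 + h) - (\<lambda>c. risk \<sigma> f \<rho> m a (W(k := upd_comp (W k) i c))) c0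
      - h * integral\<^sup>L lborel (\<lambda>x. Q x * \<rho> x) = integral\<^sup>L lborel (\<lambda>x. G x * \<rho> x)"
      using riskc[of h] riskc[of 0] iP[OF h] iP[of 0] iQ unfolding Geq by simp
    also have "\<bar>\<dots>\<bar> \<le> Kc * h\<^sup>2"
    proof (rule bint'(2))
      show "(\<lambda>x. G x) \<in> borel_measurable borel" unfolding G_def by measurable
      show "\<bar>G x\<bar> \<le> Kc * h\<^sup>2" if "\<rho> x \<noteq> 0" for x
      proof -
        have 1: "\<bar>a k * E x * (\<Delta> h x - h * x $ i * \<sigma>1 (u x))\<bar> \<le> \<bar>a k\<bar> * ME * (CL * (U + B) * B\<^sup>2 * h\<^sup>2)"
          using EB[OF that] TayB[OF that h] by (intro abs_mult_le) (auto simp: abs_mult intro: mult_left_mono)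
        have "(\<Delta> h x)\<^sup>2 \<le> (DB * \<bar>h\<bar>)\<^sup>2" using DeltaB[OF that h] by (metis abs_ge_zero power2_abs power_mono)
        then have "(a k)\<^sup>2 * (\<Delta> h x)\<^sup>2 \<le> (a k)\<^sup>2 * (DB * \<bar>h\<bar>)\<^sup>2" by (simp add: mult_left_mono)
        then have 2: "\<bar>(a k)\<^sup>2 * (\<Delta> h x)\<^sup>2 / 2\<bar> \<le> (a k)\<^sup>2 * DB\<^sup>2 * h\<^sup>2 / 2"
          by (simp add: power_mult_distrib mult.assoc)
        have "\<bar>G x\<bar> \<le> \<bar>a k\<bar> * ME * (CL * (U + B) * B\<^sup>2 * h\<^sup>2) + (a k)\<^sup>2 * DB\<^sup>2 * h\<^sup>2 / 2"
          unfolding G_def using 1 2 by linarith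
        also have "\<dots> = Kc * h\<^sup>2" by (simp add: Kc_def algebra_simps)
        finally show ?thesis .
      qed
    qed
    finally show ?thesis .
  qed
  have "((\<lambda>c. risk \<sigma> f \<rho> m a (W(k := upd_comp (W k) i c))) has_real_derivative integral\<^sup>L lborel (\<lambda>x. Q x * \<rho> x)) (at c0)"
    by (rule deriv_from_bound[OF main])
  then show ?thesis unfolding c0_def Q_def E_def u_def .
qed

end
context setting begin

lemma D0_est:
  fixes B M Q :: real
  assumes k: "k < m" and ij: "i \<noteq> j0"
    and B: "B \<ge> 0" "\<And>x. \<rho> x \<noteq> 0 \<Longrightarrow> norm x \<le> B"
    and M: "M \<ge> 0" "\<And>x. \<rho> x \<noteq> 0 \<Longrightarrow> \<bar>f x\<bar> \<le> M"
    and Q: "Q \<ge> 0" "Q \<le> 1"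
    and aQ: "\<And>l. l < m \<Longrightarrow> \<bar>a l\<bar> \<le> Q"
    and WQ: "\<And>l j. l < m \<Longrightarrow> \<bar>W l $ j\<bar> \<le> Q"
  shows "\<bar>integral\<^sup>L lborel (\<lambda>x. ((net \<sigma> m a W x - f x) * (a k * \<sigma>1 (W k \<bullet> x) * x $ i)) * \<rho> x)
            - a k * (\<Sum>l<m. a l * W l $ i)\<bar>
         \<le> (CL * (real CARD('d) * B)^3 * B + (real CARD('d) * B + CL * (real CARD('d) * B)^3) * CL * (real CARD('d) * B)^2 * B
             + M * CL * (real CARD('d) * B)^2 * B) * (real m * Q^5 + Q^3)"
proof -
  define b where "b = real CARD('d) * B"
  define E where "E x = net \<sigma> m a W x - f x" for x
  define S where "S = (\<Sum>l<m. a l * W l $ i)"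
  have b0: "b \<ge> 0" using B by (simp add: b_def)
  have CL0: "CL \<ge> 0" by (rule CL_nonneg)
  have xi: "\<rho> x \<noteq> 0 \<Longrightarrow> \<bar>x $ i\<bar> \<le> B" for x using B(2) component_le_norm_cart order_trans by blast
  have uB: "\<bar>W l \<bullet> x\<bar> \<le> b * Q" if "\<rho> x \<noteq> 0" "l < m" for l x
  proof -
    have "norm (W l) \<le> (\<Sum>j\<in>UNIV. \<bar>W l $ j\<bar>)" by (rule norm_le_l1_cart)
    also have "\<dots> \<le> real CARD('d) * Q" using sum_bounded_above[of UNIV "\<lambda>j. \<bar>W l $ j\<bar>" Q] WQ[OF that(2)] by auto
    finally have nW: "norm (W l) \<le> real CARD('d) * Q" .
    have "\<bar>W l \<bullet> x\<bar> \<le> norm (W l) * norm x" by (rule Cauchy_Schwarz_ineq2)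
    also have "\<dots> \<le> (real CARD('d) * Q) * B" using nW B(2)[OF that(1)] Q(1) by (intro mult_mono) auto
    finally show ?thesis by (simp add: b_def algebra_simps)
  qed
  define ME where "ME = real m * (Q * (b * Q + CL * (b * Q)\<^sup>2 * (b * Q))) + M"
  have EB: "\<bar>E x\<bar> \<le> ME" if "\<rho> x \<noteq> 0" for x
  proof -
    have "\<bar>net \<sigma> m a W x\<bar> \<le> real m * (Q * (b * Q + CL * (b * Q)\<^sup>2 * (b * Q)))"
      by (rule net_bound) (use aQ uB[OF that] in auto)
    then show ?thesis using M(2)[OF that] by (simp add: E_def ME_def)
  qed
  have [measurable]: "(\<lambda>x. E x) \<in> borel_measurable borel" unfolding E_def by measurable
  define T2 where "T2 x = E x * (\<sigma>1 (W k \<bullet> x) - 1) * x $ i" for x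
  define R where "R l x = (\<sigma> (W l \<bullet> x) - W l \<bullet> x) * x $ i" for l x
  have T2B: "\<bar>T2 x\<bar> \<le> ME * (CL * (b * Q)\<^sup>2) * B" if "\<rho> x \<noteq> 0" for x
    unfolding T2_def using EB[OF that] s1U[OF uB[OF that k]] xi[OF that]
    by (intro abs_mult_le) auto
  have RB: "\<bar>R l x\<bar> \<le> CL * (b * Q)\<^sup>2 * (b * Q) * B" if "\<rho> x \<noteq> 0" "l < m" for l x
    unfolding R_def using sU[OF uB[OF that]] xi[OF that(1)] by (intro abs_mult_le) auto
  have iT2: "integrable lborel (\<lambda>x. T2 x * \<rho> x)" and T2I: "\<bar>integral\<^sup>L lborel (\<lambda>x. T2 x * \<rho> x)\<bar> \<le> ME * (CL * (b * Q)\<^sup>2) * B"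
    using bint'[of T2, OF _ T2B] unfolding T2_def by (auto simp del: times_divide_eq_left)
  have iR: "integrable lborel (\<lambda>x. R l x * \<rho> x)" and RI: "\<bar>integral\<^sup>L lborel (\<lambda>x. R l x * \<rho> x)\<bar> \<le> CL * (b * Q)\<^sup>2 * (b * Q) * B"
    if "l < m" for l
    using bint'[of "R l", OF _ RB[OF _ that]] unfolding R_def by auto
  have iL: "integrable lborel (\<lambda>x. (W l \<bullet> x) * x $ i * \<rho> x)" for l
  proof -
    have "(\<lambda>x. (W l \<bullet> x) * x $ i * \<rho> x) = (\<lambda>x. \<Sum>j\<in>UNIV. W l $ j * (x $ j * x $ i * \<rho> x))"
      by (simp add: inner_vec_def sum_distrib_left sum_distrib_right algebra_simps)
    then show ?thesis using rho_second by simp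
  qed
  have Lin: "integral\<^sup>L lborel (\<lambda>x. (W l \<bullet> x) * x $ i * \<rho> x) = W l $ i" for l
  proof -
    have "(\<lambda>x. (W l \<bullet> x) * x $ i * \<rho> x) = (\<lambda>x. \<Sum>j\<in>UNIV. W l $ j * (x $ j * x $ i * \<rho> x))"
      by (simp add: inner_vec_def sum_distrib_left sum_distrib_right algebra_simps)
    then have "integral\<^sup>L lborel (\<lambda>x. (W l \<bullet> x) * x $ i * \<rho> x) = (\<Sum>j\<in>UNIV. W l $ j * integral\<^sup>L lborel (\<lambda>x. x $ j * x $ i * \<rho> x))"
      using rho_second by simp
    also have "\<dots> = (\<Sum>j\<in>UNIV. W l $ j * (if j = i then 1 else 0))"
    proof (rule sum.cong)
      fix j show "W l $ j * integral\<^sup>L lborel (\<lambda>x. x $ j * x $ i * \<rho> x) = W l $ j * (if j = i then 1 else 0)"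
        using rho_cov[of j i] rho_var[of i] by (auto simp: power2_eq_square)
    qed simp
    also have "\<dots> = W l $ i" by (simp add: if_distrib cong: if_cong)
    finally show ?thesis .
  qed
  have iS: "integrable lborel (\<lambda>x. \<sigma> (W l \<bullet> x) * x $ i * \<rho> x)" if "l < m" for l
  proof -
    have "(\<lambda>x. \<sigma> (W l \<bullet> x) * x $ i * \<rho> x) = (\<lambda>x. (W l \<bullet> x) * x $ i * \<rho> x + R l x * \<rho> x)"
      by (simp add: R_def algebra_simps)
    then show ?thesis using iL iR[OF that] by simp
  qed
  have SI: "integral\<^sup>L lborel (\<lambda>x. \<sigma> (W l \<bullet> x) * x $ i * \<rho> x) = W l $ i + integral\<^sup>L lborel (\<lambda>x. R l x * \<rho> x)" if "l < m" for l
  proof -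
    have "(\<lambda>x. \<sigma> (W l \<bullet> x) * x $ i * \<rho> x) = (\<lambda>x. (W l \<bullet> x) * x $ i * \<rho> x + R l x * \<rho> x)"
      by (simp add: R_def algebra_simps)
    then show ?thesis using iL iR[OF that] Lin by simp
  qed
  have netx: "(\<lambda>x. net \<sigma> m a W x * x $ i * \<rho> x) = (\<lambda>x. \<Sum>l<m. a l * (\<sigma> (W l \<bullet> x) * x $ i * \<rho> x))"
    by (simp add: net_def sum_distrib_left sum_distrib_right algebra_simps)
  have iN: "integrable lborel (\<lambda>x. net \<sigma> m a W x * x $ i * \<rho> x)"
    unfolding netx using iS by (auto intro!: integrable_sum)
  have NI: "integral\<^sup>L lborel (\<lambda>x. net \<sigma> m a W x * x $ i * \<rho> x) = S + (\<Sum>l<m. a l * integral\<^sup>L lborel (\<lambda>x. R l x * \<rho> x))"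
  proof -
    have "integral\<^sup>L lborel (\<lambda>x. net \<sigma> m a W x * x $ i * \<rho> x) = (\<Sum>l<m. a l * integral\<^sup>L lborel (\<lambda>x. \<sigma> (W l \<bullet> x) * x $ i * \<rho> x))"
      unfolding netx
      using Bochner_Integration.integral_sum[where I="{..<m}" and M=lborel and f="\<lambda>l x. a l * (\<sigma> (W l \<bullet> x) * x $ i * \<rho> x)"] iS by simp
    also have "\<dots> = (\<Sum>l<m. a l * W l $ i + a l * integral\<^sup>L lborel (\<lambda>x. R l x * \<rho> x))"
      by (rule sum.cong) (auto simp: SI distrib_left)
    finally show ?thesis by (simp add: S_def sum.distrib)
  qed
  have iF: "integrable lborel (\<lambda>x. f x * x $ i * \<rho> x)"
  proof -
    have "integrable lborel (\<lambda>x. (f x * x $ i) * \<rho> x)"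
      by (rule bint'(1)[of _ "M * B"]) (use M(2) xi in \<open>auto intro!: abs_mult_le\<close>)
    then show ?thesis by simp
  qed
  have FI: "integral\<^sup>L lborel (\<lambda>x. f x * x $ i * \<rho> x) = 0" using f_corr[of i] ij by simp
  have main_eq: "integral\<^sup>L lborel (\<lambda>x. ((net \<sigma> m a W x - f x) * (a k * \<sigma>1 (W k \<bullet> x) * x $ i)) * \<rho> x)
      = a k * (integral\<^sup>L lborel (\<lambda>x. net \<sigma> m a W x * x $ i * \<rho> x) - integral\<^sup>L lborel (\<lambda>x. f x * x $ i * \<rho> x)
               + integral\<^sup>L lborel (\<lambda>x. T2 x * \<rho> x))"
  proof -
    have "(\<lambda>x. ((net \<sigma> m a W x - f x) * (a k * \<sigma>1 (W k \<bullet> x) * x $ i)) * \<rho> x)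
        = (\<lambda>x. a k * (net \<sigma> m a W x * x $ i * \<rho> x - f x * x $ i * \<rho> x + T2 x * \<rho> x))"
      by (simp add: T2_def E_def algebra_simps)
    then show ?thesis using iN iF iT2 by simp
  qed
  have diff: "integral\<^sup>L lborel (\<lambda>x. ((net \<sigma> m a W x - f x) * (a k * \<sigma>1 (W k \<bullet> x) * x $ i)) * \<rho> x) - a k * S
      = a k * ((\<Sum>l<m. a l * integral\<^sup>L lborel (\<lambda>x. R l x * \<rho> x)) + integral\<^sup>L lborel (\<lambda>x. T2 x * \<rho> x))"
    unfolding main_eq NI FI by (simp add: algebra_simps)
  have sumB: "\<bar>\<Sum>l<m. a l * integral\<^sup>L lborel (\<lambda>x. R l x * \<rho> x)\<bar> \<le> real m * (Q * (CL * (b * Q)\<^sup>2 * (b * Q) * B))"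
  proof -
    have "\<bar>\<Sum>l<m. a l * integral\<^sup>L lborel (\<lambda>x. R l x * \<rho> x)\<bar> \<le> (\<Sum>l<m. \<bar>a l * integral\<^sup>L lborel (\<lambda>x. R l x * \<rho> x)\<bar>)"
      by (rule sum_abs)
    also have "\<dots> \<le> (\<Sum>l<m. Q * (CL * (b * Q)\<^sup>2 * (b * Q) * B))"
      by (rule sum_mono) (use aQ RI in \<open>auto intro!: abs_mult_le\<close>)
    finally show ?thesis by simp
  qed
  define X where "X = real m * (Q * (CL * (b * Q)\<^sup>2 * (b * Q) * B)) + ME * (CL * (b * Q)\<^sup>2) * B"
  have "\<bar>integral\<^sup>L lborel (\<lambda>x. ((net \<sigma> m a W x - f x) * (a k * \<sigma>1 (W k \<bullet> x) * x $ i)) * \<rho> x) - a k * S\<bar> \<le> Q * X"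
    unfolding diff X_def
    by (rule abs_mult_le) (use aQ[OF k] sumB T2I abs_triangle_ineq in \<open>auto intro: order_trans\<close>)
  also have "\<dots> \<le> (CL * b^3 * B + (b + CL * b^3) * CL * b^2 * B + M * CL * b^2 * B) * (real m * Q^5 + Q^3)"
  proof -
    have eq: "Q * X = real m * Q^5 * (CL * b^3 * B) + real m * CL * b^2 * B * (b * Q^5 + CL * b^3 * Q^7) + M * CL * b^2 * B * Q^3"
      unfolding X_def ME_def by (simp add: power2_eq_square power3_eq_cube algebra_simps numeral_eq_Suc)
    have "Q^7 \<le> Q^5" using Q by (simp add: power_decreasing)
    then have "real m * CL * b^2 * B * (b * Q^5 + CL * b^3 * Q^7) \<le> real m * CL * b^2 * B * (b * Q^5 + CL * b^3 * Q^5)"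
      using CL0 b0 B(1) by (intro mult_left_mono add_left_mono) auto
    then have "Q * X \<le> real m * Q^5 * (CL * b^3 * B) + real m * CL * b^2 * B * (b * Q^5 + CL * b^3 * Q^5) + M * CL * b^2 * B * Q^3"
      unfolding eq by linarith
    also have "\<dots> = (CL * b^3 * B + (b + CL * b^3) * CL * b^2 * B + M * CL * b^2 * B) * (real m * Q^5 + Q^3) - ((CL * b^3 * B + (b + CL * b^3) * CL * b^2 * B) * Q^3 + M * CL * b^2 * B * real m * Q^5)"
      by algebra
    also have "\<dots> \<le> (CL * b^3 * B + (b + CL * b^3) * CL * b^2 * B + M * CL * b^2 * B) * (real m * Q^5 + Q^3)"
    proof -
      have "0 \<le> (CL * b^3 * B + (b + CL * b^3) * CL * b^2 * B) * Q^3 + M * CL * b^2 * B * real m * Q^5"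
        using M(1) CL0 b0 B(1) Q(1) by (intro add_nonneg_nonneg mult_nonneg_nonneg) auto
      then show ?thesis by linarith
    qed
    finally show ?thesis .
  qed
  finally show ?thesis unfolding S_def b_def .
qed

end

lemma ode_bound:
  fixes v D A :: "real \<Rightarrow> nat \<Rightarrow> real"
  assumes t: "0 \<le> t0" "t0 \<le> t"
    and dv: "\<And>s k. s \<in> {t0..t} \<Longrightarrow> k < m \<Longrightarrow> ((\<lambda>\<tau>. v \<tau> k) has_real_derivative (- D s k)) (at s within {0..})"
    and eb: "\<And>s k. s \<in> {t0..t} \<Longrightarrow> k < m \<Longrightarrow> \<bar>D s k - A s k * (\<Sum>l<m. A s l * v s l)\<bar> \<le> \<epsilon>"
  shows "sqrt (\<Sum>k<m. (v t k)\<^sup>2) \<le> sqrt (\<Sum>k<m. (v t0 k)\<^sup>2) + sqrt (real m) * \<epsilon> * (t - t0)"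
proof (cases "m = 0")
  case True then show ?thesis by simp
next
  case False
  have e0: "\<epsilon> \<ge> 0" using eb[of t0 0] t False by (auto intro: order_trans[OF abs_ge_zero])
  define N where "N s = (\<Sum>k<m. (v s k)\<^sup>2)" for s
  have N0: "N s \<ge> 0" for s unfolding N_def by (simp add: sum_nonneg)
  define c where "c = sqrt (real m) * \<epsilon>"
  have c0: "c \<ge> 0" using e0 by (simp add: c_def)
  have key: "sqrt (N t + \<delta>) - c * t \<le> sqrt (N t0 + \<delta>) - c * t0" if d: "\<delta> > 0" for \<delta>
  proof (rule DERIV_nonpos_imp_decreasing_open[OF t(2), where f = "\<lambda>s. sqrt (N s + \<delta>) - c * s"])
    fix s assume s: "t0 < s" "s < t"
    have sI: "s \<in> {t0..t}" using s by auto
    have int: "s \<in> interior {0::real..}" using s t by simp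
    have dvs: "((\<lambda>\<tau>. v \<tau> k) has_real_derivative (- D s k)) (at s)" if "k < m" for k
      using dv[OF sI that] at_within_interior[OF int] by simp
    define N' where "N' = (\<Sum>k<m. 2 * v s k * (- D s k))"
    have dN: "(N has_real_derivative N') (at s)"
      unfolding N_def N'_def
      by (rule DERIV_sum) (use dvs in \<open>auto intro!: derivative_eq_intros\<close>)
    have pos: "N s + \<delta> > 0" using N0[of s] d by linarith
    have dphi: "((\<lambda>s. sqrt (N s + \<delta>) - c * s) has_real_derivative (inverse (sqrt (N s + \<delta>)) / 2 * N' - c)) (at s)"
    proof -
      have "((\<lambda>s. sqrt (N s + \<delta>)) has_real_derivative (inverse (sqrt (N s + \<delta>)) / 2 * N')) (at s)"
      proof (rule DERIV_chain2[where f = sqrt and g = "\<lambda>s. N s + \<delta>"])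
        show "DERIV sqrt (N s + \<delta>) :> inverse (sqrt (N s + \<delta>)) / 2" by (rule DERIV_real_sqrt[OF pos])
        show "((\<lambda>s. N s + \<delta>) has_real_derivative N') (at s)" using dN by (auto intro!: derivative_eq_intros)
      qed
      then show ?thesis by (rule DERIV_diff) (auto intro!: derivative_eq_intros)
    qed
    define S where "S = (\<Sum>l<m. A s l * v s l)"
    have N'eq: "N' = - 2 * S\<^sup>2 + (\<Sum>k<m. 2 * v s k * (A s k * S - D s k))"
    proof -
      have "N' = (\<Sum>k<m. - 2 * S * (A s k * v s k) + 2 * v s k * (A s k * S - D s k))"
        unfolding N'_def by (rule sum.cong) (auto simp: algebra_simps)
      also have "\<dots> = (\<Sum>k<m. - 2 * S * (A s k * v s k)) + (\<Sum>k<m. 2 * v s k * (A s k * S - D s k))"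
        by (rule sum.distrib)
      also have "(\<Sum>k<m. - 2 * S * (A s k * v s k)) = - 2 * S * S"
        unfolding sum_distrib_left[symmetric] S_def ..
      finally show ?thesis by (simp add: power2_eq_square)
    qed
    have "(\<Sum>k<m. 2 * v s k * (A s k * S - D s k)) \<le> (\<Sum>k<m. 2 * (\<bar>v s k\<bar> * \<epsilon>))"
    proof (rule sum_mono)
      fix k assume k: "k \<in> {..<m}"
      have "\<bar>A s k * S - D s k\<bar> \<le> \<epsilon>" using eb[OF sI, of k] k unfolding S_def by (simp add: abs_minus_commute)
      then have "\<bar>v s k * (A s k * S - D s k)\<bar> \<le> \<bar>v s k\<bar> * \<epsilon>" by (simp add: abs_mult mult_left_mono)
      then show "2 * v s k * (A s k * S - D s k) \<le> 2 * (\<bar>v s k\<bar> * \<epsilon>)" by (simp add: abs_le_iff mult.assoc)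
    qed
    also have "\<dots> = 2 * \<epsilon> * (\<Sum>k<m. \<bar>v s k\<bar>)" by (simp add: sum_distrib_left algebra_simps)
    also have "\<dots> \<le> 2 * \<epsilon> * (sqrt (real m) * sqrt (N s))"
    proof -
      have "(\<Sum>k<m. 1 * \<bar>v s k\<bar>)\<^sup>2 \<le> (\<Sum>k<m. 1\<^sup>2) * (\<Sum>k<m. \<bar>v s k\<bar>\<^sup>2)"
        by (rule Cauchy_Schwarz_ineq_sum)
      then have "(\<Sum>k<m. \<bar>v s k\<bar>)\<^sup>2 \<le> real m * N s" by (simp add: N_def)
      then have "(\<Sum>k<m. \<bar>v s k\<bar>) \<le> sqrt (real m * N s)" by (rule real_le_rsqrt)
      then show ?thesis using e0 by (simp add: real_sqrt_mult mult_left_mono)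
    qed
    also have "\<dots> \<le> 2 * \<epsilon> * (sqrt (real m) * sqrt (N s + \<delta>))"
      using e0 d by (intro mult_left_mono) auto
    finally have cs: "(\<Sum>k<m. 2 * v s k * (A s k * S - D s k)) \<le> 2 * \<epsilon> * (sqrt (real m) * sqrt (N s + \<delta>))" .
    have "N' \<le> 2 * c * sqrt (N s + \<delta>)"
    proof -
      have "2 * \<epsilon> * (sqrt (real m) * sqrt (N s + \<delta>)) = 2 * c * sqrt (N s + \<delta>)" by (simp add: c_def algebra_simps)
      moreover have "S\<^sup>2 \<ge> 0" by simp
      ultimately show ?thesis using cs
        unfolding N'eq by linarith
    qed
    then have "inverse (sqrt (N s + \<delta>)) / 2 * N' \<le> c"
      using pos by (simp add: field_simps)
    then show "\<exists>y. ((\<lambda>s. sqrt (N s + \<delta>) - c * s) has_real_derivative y) (at s) \<and> y \<le> 0"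
      using dphi by (intro exI[of _ "inverse (sqrt (N s + \<delta>)) / 2 * N' - c"]) auto
  next
    have "continuous_on {t0..t} (\<lambda>s. v s k)" if "k < m" for k
      unfolding continuous_on_eq_continuous_within
    proof
      fix s assume s: "s \<in> {t0..t}"
      show "continuous (at s within {t0..t}) (\<lambda>s. v s k)"
        by (rule continuous_within_subset[OF DERIV_continuous[OF dv[OF s that]]]) (use t in auto)
    qed
    then show "continuous_on {t0..t} (\<lambda>s. sqrt (N s + \<delta>) - c * s)"
      unfolding N_def by (auto intro!: continuous_intros)
  qed
  show ?thesis
  proof (rule field_le_epsilon)
    fix e :: real assume e: "e > 0"
    have "sqrt (N t) \<le> sqrt (N t + e\<^sup>2)" by simp
    also have "\<dots> \<le> sqrt (N t0 + e\<^sup>2) + c * (t - t0)" using key[of "e\<^sup>2"] e by (simp add: algebra_simps)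
    also have "\<dots> \<le> sqrt (N t0) + e + c * (t - t0)"
      using sqrt_add_le_add_sqrt[of "N t0" "e\<^sup>2"] N0 e by simp
    finally show "sqrt (\<Sum>k<m. (v t k)\<^sup>2) \<le> sqrt (\<Sum>k<m. (v t0 k)\<^sup>2) + sqrt (real m) * \<epsilon> * (t - t0) + e"
      by (simp add: N_def c_def algebra_simps)
  qed
qed


lemma pw:
  fixes x y \<beta> \<gamma> :: real
  assumes x: "x > 0" and y: "y > 0"
  shows "sqrt x * (x powr (-\<beta>) * y powr \<gamma>)^3 = y powr (3*\<gamma>) / x powr (3*\<beta> - 1/2)"
    and "sqrt x * (x * (x powr (-\<beta>) * y powr \<gamma>)^5) = y powr (5*\<gamma>) / x powr (5*\<beta> - 3/2)"
proof -
  have sx: "sqrt x = x powr (1/2)" using x by (simp add: powr_half_sqrt)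
  have x1: "x = x powr 1" using x by simp
  have p3: "(x powr (-\<beta>) * y powr \<gamma>)^3 = x powr (3 * (-\<beta>)) * y powr (3*\<gamma>)"
    using x y by (simp add: power_mult_distrib powr_power)
  have p5: "(x powr (-\<beta>) * y powr \<gamma>)^5 = x powr (5 * (-\<beta>)) * y powr (5*\<gamma>)"
    using x y by (simp add: power_mult_distrib powr_power)
  have e3: "1/2 + 3 * (-\<beta>) = -(3*\<beta> - 1/2)" by simp
  have e5: "1/2 + (1 + 5 * (-\<beta>)) = -(5*\<beta> - 3/2)" by simp
  have d3: "x powr (1/2) * x powr (3 * (-\<beta>)) = 1 / x powr (3*\<beta> - 1/2)"
    unfolding powr_add[symmetric] e3 powr_minus_divide ..
  have d5: "x powr (1/2) * (x powr 1 * x powr (5 * (-\<beta>))) = 1 / x powr (5*\<beta> - 3/2)"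
    unfolding powr_add[symmetric] e5 powr_minus_divide ..
  show "sqrt x * (x powr (-\<beta>) * y powr \<gamma>)^3 = y powr (3*\<gamma>) / x powr (3*\<beta> - 1/2)"
  proof -
    have "sqrt x * (x powr (-\<beta>) * y powr \<gamma>)^3 = (x powr (1/2) * x powr (3 * (-\<beta>))) * y powr (3*\<gamma>)"
      unfolding sx p3 by (simp only: mult.assoc)
    then show ?thesis unfolding d3 by simp
  qed
  show "sqrt x * (x * (x powr (-\<beta>) * y powr \<gamma>)^5) = y powr (5*\<gamma>) / x powr (5*\<beta> - 3/2)"
  proof -
    have "sqrt x * (x * (x powr (-\<beta>) * y powr \<gamma>)^5) = (x powr (1/2) * (x powr 1 * x powr (5 * (-\<beta>)))) * y powr (5*\<gamma>)"
      unfolding sx p5 using x by (simp add: mult.assoc)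
    then show ?thesis unfolding d5 by simp
  qed
qed


theorem lemma2:
  fixes \<rho> f :: "real^'d \<Rightarrow> real"
    and \<sigma> \<sigma>1 \<sigma>2 \<sigma>3 :: "real \<Rightarrow> real"
    and CL \<beta> \<gamma> :: real
    and j0 :: 'd
  assumes dim: "CARD('d) \<ge> 2"
    and rho_meas: "\<rho> \<in> borel_measurable borel"
    and rho_nonneg: "\<And>x. \<rho> x \<ge> 0"
    and rho_int: "integrable lborel \<rho>"
    and rho_prob: "integral\<^sup>L lborel \<rho> = 1"
    and rho_cpt: "compact (closure {x. \<rho> x \<noteq> 0})"
    and rho_second: "\<And>i j. integrable lborel (\<lambda>x. x $ i * x $ j * \<rho> x)"
    and rho_var: "\<And>i. integral\<^sup>L lborel (\<lambda>x. (x $ i)^2 * \<rho> x) = 1"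
    and rho_cov: "\<And>i j. i \<noteq> j \<Longrightarrow> integral\<^sup>L lborel (\<lambda>x. x $ i * x $ j * \<rho> x) = 0"
    and f_meas: "f \<in> borel_measurable borel"
    and f_bdd: "bounded (f ` closure {x. \<rho> x \<noteq> 0})"
    and f_corr: "\<And>j. integral\<^sup>L lborel (\<lambda>x. f x * x $ j * \<rho> x) = (if j = j0 then 1 else 0)"
    and s1: "\<And>z. (\<sigma> has_real_derivative \<sigma>1 z) (at z)"
    and s2: "\<And>z. (\<sigma>1 has_real_derivative \<sigma>2 z) (at z)"
    and s3: "\<And>z. (\<sigma>2 has_real_derivative \<sigma>3 z) (at z)"
    and s0: "\<sigma> 0 = 0" "\<sigma>1 0 = 1" "\<sigma>2 0 = 0"
    and sL: "\<And>z. \<bar>\<sigma>3 z\<bar> \<le> CL"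
    and beta: "\<beta> > 0" and gamma: "\<gamma> > 0"
  shows "\<exists>C>0. \<forall>m::nat. \<forall>a w t0 t i.
           m \<ge> 2
         \<longrightarrow> real m powr (-\<beta>) * ln (real m) powr \<gamma> \<le> 1
         \<longrightarrow> grad_flow \<sigma> f \<rho> m a w
         \<longrightarrow> 0 \<le> t0 \<longrightarrow> t0 \<le> t
         \<longrightarrow> (\<forall>s\<in>{t0..t}. qmax m (a s) (w s) \<le> real m powr (-\<beta>) * ln (real m) powr \<gamma>)
         \<longrightarrow> i \<noteq> j0
         \<longrightarrow> sqrt (\<Sum>k<m. (w t k $ i)^2)
             \<le> sqrt (\<Sum>k<m. (w t0 k $ i)^2)
                + C * max (ln (real m) powr (3*\<gamma>) / real m powr (3*\<beta> - 1/2))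
                          (ln (real m) powr (5*\<gamma>) / real m powr (5*\<beta> - 3/2)) * (t - t0)"
  proof -
  interpret setting \<sigma> \<sigma>1 \<sigma>2 \<sigma>3 CL \<rho> f j0
    by unfold_locales (use assms in auto)
  obtain B where B: "B \<ge> 0" "\<And>x. \<rho> x \<noteq> 0 \<Longrightarrow> norm x \<le> B" using supp_bound by blast
  obtain M where M: "M \<ge> 0" "\<And>x. \<rho> x \<noteq> 0 \<Longrightarrow> \<bar>f x\<bar> \<le> M" using f_bound by blast
  define K0 where "K0 = CL * (real CARD('d) * B)^3 * B + (real CARD('d) * B + CL * (real CARD('d) * B)^3) * CL * (real CARD('d) * B)^2 * B
             + M * CL * (real CARD('d) * B)^2 * B"
  have K0: "K0 \<ge> 0" unfolding K0_def using B(1) M(1) CL_nonneg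
    by (intro add_nonneg_nonneg mult_nonneg_nonneg) auto
  show ?thesis
  proof (intro exI[of _ "2 * K0 + 1"] conjI allI impI)
    show "2 * K0 + 1 > 0" using K0 by simp
    fix m :: nat and a w t0 t i
    assume m2: "m \<ge> 2"
      and Q1: "real m powr (-\<beta>) * ln (real m) powr \<gamma> \<le> 1"
      and gf: "grad_flow \<sigma> f \<rho> m a w"
      and t0: "0 \<le> t0" and tt: "t0 \<le> t"
      and qb: "\<forall>s\<in>{t0..t}. qmax m (a s) (w s) \<le> real m powr (-\<beta>) * ln (real m) powr \<gamma>"
      and ij: "i \<noteq> j0"
    define Q where "Q = real m powr (-\<beta>) * ln (real m) powr \<gamma>"
    have mpos: "real m > 0" using m2 by simp
    have lpos: "ln (real m) > 0" using m2 by simp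
    have Q0: "Q \<ge> 0" unfolding Q_def by simp
    have aQ: "\<bar>a s l\<bar> \<le> Q" and WQ: "\<bar>w s l $ j\<bar> \<le> Q" if "s \<in> {t0..t}" "l < m" for s l j
    proof -
      have q: "qmax m (a s) (w s) \<le> Q" using qb that unfolding Q_def by auto
      let ?S = "{\<bar>a s k\<bar> | k. k < m} \<union> {\<bar>w s k $ i\<bar> | k i. k < m}"
      have "{\<bar>a s k\<bar> | k. k < m} \<subseteq> (\<lambda>k. \<bar>a s k\<bar>) ` {..<m}" by auto
      moreover have "{\<bar>w s k $ i\<bar> | k i. k < m} \<subseteq> (\<lambda>(k, i). \<bar>w s k $ i\<bar>) ` ({..<m} \<times> UNIV)" by auto
      ultimately have fin: "finite ?S" by (meson finite_Un finite_SigmaI finite_imageI finite_lessThan finite finite_subset)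
      have "\<bar>a s l\<bar> \<in> ?S" "\<bar>w s l $ j\<bar> \<in> ?S" using that by auto
      then have "\<bar>a s l\<bar> \<le> Max ?S" "\<bar>w s l $ j\<bar> \<le> Max ?S" using fin by auto
      then show "\<bar>a s l\<bar> \<le> Q" "\<bar>w s l $ j\<bar> \<le> Q" using q unfolding qmax_def by auto
    qed
    define D where "D s k = integral\<^sup>L lborel (\<lambda>x. ((net \<sigma> m (a s) (w s) x - f x) * (a s k * \<sigma>1 (w s k \<bullet> x) * x $ i)) * \<rho> x)" for s k
    have dv: "((\<lambda>\<tau>. w \<tau> k $ i) has_real_derivative (- D s k)) (at s within {0..})"
      if s: "s \<in> {t0..t}" and k: "k < m" for s k
    proof -
      have "s \<ge> 0" using s t0 by auto
      then obtain D' where D': "((\<lambda>c. risk \<sigma> f \<rho> m (a s) ((w s)(k := upd_comp (w s k) i c))) has_real_derivative D') (at (w s k $ i))"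
        "((\<lambda>\<tau>. w \<tau> k $ i) has_real_derivative (- D')) (at s within {0..})"
        using gf k unfolding grad_flow_def by blast
      have "D' = D s k" using DERIV_unique[OF D'(1) risk_deriv[OF k, of "a s" "w s" i]] unfolding D_def .
      then show ?thesis using D'(2) by simp
    qed
    have eb: "\<bar>D s k - a s k * (\<Sum>l<m. a s l * w s l $ i)\<bar> \<le> K0 * (real m * Q^5 + Q^3)"
      if s: "s \<in> {t0..t}" and k: "k < m" for s k
      unfolding D_def K0_def
      by (rule D0_est[OF k ij B M Q0]) (use Q1 aQ[OF s] WQ[OF s] in \<open>auto simp: Q_def\<close>)
    have ode: "sqrt (\<Sum>k<m. (w t k $ i)\<^sup>2) \<le> sqrt (\<Sum>k<m. (w t0 k $ i)\<^sup>2) + sqrt (real m) * (K0 * (real m * Q^5 + Q^3)) * (t - t0)"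
      by (rule ode_bound[where D = D and A = a, OF t0 tt]) (use dv eb in auto)
    define X3 where "X3 = ln (real m) powr (3*\<gamma>) / real m powr (3*\<beta> - 1/2)"
    define X5 where "X5 = ln (real m) powr (5*\<gamma>) / real m powr (5*\<beta> - 3/2)"
    have "sqrt (real m) * (K0 * (real m * Q^5 + Q^3)) = K0 * (sqrt (real m) * (real m * Q^5) + sqrt (real m) * Q^3)"
      by (simp add: algebra_simps)
    also have "\<dots> = K0 * (X5 + X3)"
      unfolding X3_def X5_def Q_def pw[OF mpos lpos] ..
    also have "\<dots> \<le> (2 * K0 + 1) * max X3 X5"
    proof -
      have "X5 + X3 \<le> 2 * max X3 X5" by simp
      then have "K0 * (X5 + X3) \<le> K0 * (2 * max X3 X5)" using K0 by (rule mult_left_mono)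
      moreover have "max X3 X5 \<ge> 0" unfolding X3_def by (simp add: le_max_iff_disj)
      ultimately show ?thesis by (simp add: algebra_simps)
    qed
    finally have "sqrt (real m) * (K0 * (real m * Q^5 + Q^3)) * (t - t0) \<le> (2 * K0 + 1) * max X3 X5 * (t - t0)"
      using tt by (intro mult_right_mono) auto
    then show "sqrt (\<Sum>k<m. (w t k $ i)^2)
             \<le> sqrt (\<Sum>k<m. (w t0 k $ i)^2)
                + (2 * K0 + 1) * max (ln (real m) powr (3*\<gamma>) / real m powr (3*\<beta> - 1/2))
                          (ln (real m) powr (5*\<gamma>) / real m powr (5*\<beta> - 3/2)) * (t - t0)"
      using ode unfolding X3_def X5_def by linarith
  qed
qed

end
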